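(* Let $\mu\in(\mathbb Z^n_{\ge0})_+$, let $\ell\in[n]$ with $\ell\ge\ell(\mu)$, and let $F\in B(\varpi_\ell)$ be such that $F\otimes T^0_\mu$ is semistandard. Then $$\Psi_{F\otimes T^0_\mu}=t^{\ell(u_F)}(T_{u_F^{-1}})^{-1}\mathbf 1_{\varpi_\ell+\mu}.$$ In particular $\Psi_{T^0_\lambda}=\mathbf 1_\lambda$ for every $\lambda\in(\mathbb Z^n_{\ge0})_+$.
   Context: Fix $n\ge1$, $[n]=\{1,\dots,n\}$. $S_n$ with simple transpositions $s_i$ and length $\ell(\cdot)$ acts on $\mathbb Z^n$ by permuting coordinates; $\varpi_k=\varepsilon_1+\dots+\varepsilon_k$. $(\mathbb Z^n_{\ge0})_+=\{\lambda\in\mathbb Z^n_{\ge0}:\lambda_1\ge\dots\ge\lambda_n\}$, $\ell(\mu)$ = number of nonzero parts. $S_{n,\lambda}$ is the stabilizer of $\lambda$. The affine Hecke algebra $H$ is the $\mathbb Z[t^{\pm1}]$-algebra with generators $T_1,\dots,T_{n-1},X_1^{\pm1},\dots,X_n^{\pm1}$ and relations $T_i^2=(t-1)T_i+t$, $T_iT_{i+1}T_i=T_{i+1}T_iT_{i+1}$, $T_iT_j=T_jT_i$ ($|i-j|>1$), $X_iX_j=X_jX_i$, $T_iX_iT_i=tX_{i+1}$, $T_iX_j=X_jT_i$ ($j\notin\{i,i+1\}$). $T_w=T_{i_1}\cdots T_{i_m}$ for a reduced word of $w$. $H_n=\mathrm{span}\{T_w:w\in S_n\}$, $H_{n,\lambda}=\mathrm{span}\{T_w:w\in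 S_{n,\lambda}\}$, $\mathbf 1_\lambda=\sum_{w\in S_{n,\lambda}}T_w$. Columns: $B(\varpi_\ell)$ is the set of $C=(c_1<\dots<c_\ell)\subseteq[n]$; $u_C\in S_n$ sends $k\mapsto c_k$ ($k\le\ell$) and sends $\ell+1,\dots,n$ increasingly onto $[n]\setminus C$. Tensors $T=C_r\otimes\cdots\otimes C_1$ ($C_i\in B(\varpi_{\ell_i})$, $\ell_1\le\dots\le\ell_r$) are fillings of the Young diagram of $\sum\varpi_{\ell_i}$ with columns $C_r,\dots,C_1$ left to right; semistandard means rows weakly increase left to right. For $\mu\in(\mathbb Z^n_{\ge0})_+$, $T^0_\mu$ is the tableau of shape $\mu$ whose row $i$ is filled with $i$ (all columns equal to $(1,\dots,m)$); $T^0_0$ is empty and $F\otimes T^0_0=F$. $\Psi$: each $h\in H_n$ is uniquely $\sum_{F\in B(\varpi_\ell)}T_{u_F}h_F$ with $h_F\in H_{n,\varpi_\ell}$. For a column $C\in B(\varpi_\ell)$, $\Psi_C=t^{\ell(u_C)}(T_{u_C^{-1}})^{-1}\mathbf 1_{\varpi_\ell}$; for $T=C\otimes S$ ($C\in B(\varpi_\ell)$, $S$ with columns of length $\le\ell$), write $\Psi_S=\sum_{E\in B(\varpi_\ell)}T_{u_E}h_{E,S}$ ($h_{E,S}\in H_{n,\varpi_\ell}$) and set $\Psi_T=t^{\ell(u_C)}(T_{u_C^{-1}})^{-1}h_{C,S}$. *)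

theory Defs
  imports "HOL-Combinatorics.Permutations" "HOL-Library.Function_Algebras"
begin

text \<open>The symmetric group S_n is the set of permutations of {1..n},
  as functions nat => nat fixing everything outside {1..n}; the group product is
  function composition.  Elements of the finite Hecke algebra H_n over a commutative
  ring 'a (with parameter t) are coefficient functions (nat => nat) => 'a supported
  on S_n: h corresponds to the sum over w of (h w) T_w.\<close>

type_synonym perm = "nat \<Rightarrow> nat"
type_synonym 'a hecke = "perm \<Rightarrow> 'a"

definition perms :: "nat \<Rightarrow> perm set" where
  "perms n = {w. w permutes {1..n}}"

definition len :: "nat \<Rightarrow> perm \<Rightarrow> nat" where
  "len n w = card {(i, j). 1 \<le> i \<and> i < j \<and> j \<le> n \<and> w j < w i}"

definition sref :: "nat \<Rightarrow> perm" where
  "sref i = transpose i (Suc i)"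

definition Hn :: "nat \<Rightarrow> 'a::zero hecke set" where
  "Hn n = {h. \<forall>w. w \<notin> perms n \<longrightarrow> h w = 0}"

definition Tb :: "perm \<Rightarrow> 'a::{zero,one} hecke" where
  "Tb w = (\<lambda>v. if v = w then 1 else 0)"

definition sc :: "'a::times \<Rightarrow> 'a hecke \<Rightarrow> 'a hecke" where
  "sc c h = (\<lambda>v. c * h v)"

text \<open>left multiplication by the generator T_i, using
  T_i T_w = T_{s_i w} if l(s_i w) > l(w), and (t-1) T_w + t T_{s_i w} otherwise\<close>
definition gen_mul :: "nat \<Rightarrow> 'a::comm_ring_1 \<Rightarrow> nat \<Rightarrow> 'a hecke \<Rightarrow> 'a hecke" where
  "gen_mul n t i h = (\<Sum>w\<in>perms n. sc (h w)
      (if len n w < len n (sref i \<circ> w) then Tb (sref i \<circ> w)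
       else sc (t - 1) (Tb w) + sc t (Tb (sref i \<circ> w))))"

text \<open>a reduced word for w (fuel = length): w = s_i o w' with l(w') = l(w) - 1\<close>
fun rword :: "nat \<Rightarrow> nat \<Rightarrow> perm \<Rightarrow> nat list" where
  "rword n 0 w = []"
| "rword n (Suc k) w =
     (let i = (LEAST i. 1 \<le> i \<and> i < n \<and> len n (sref i \<circ> w) < len n w)
      in i # rword n k (sref i \<circ> w))"

definition Tw_mul :: "nat \<Rightarrow> 'a::comm_ring_1 \<Rightarrow> perm \<Rightarrow> 'a hecke \<Rightarrow> 'a hecke" where
  "Tw_mul n t w g = foldr (gen_mul n t) (rword n (len n w) w) g"

definition hmul :: "nat \<Rightarrow> 'a::comm_ring_1 \<Rightarrow> 'a hecke \<Rightarrow> 'a hecke \<Rightarrow> 'a hecke" where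
  "hmul n t h g = (\<Sum>w\<in>perms n. sc (h w) (Tw_mul n t w g))"

definition hinv :: "nat \<Rightarrow> 'a::comm_ring_1 \<Rightarrow> 'a hecke \<Rightarrow> 'a hecke" where
  "hinv n t h = (THE g. g \<in> Hn n \<and> hmul n t h g = Tb id \<and> hmul n t g h = Tb id)"

text \<open>weights lambda in Z^n_{>=0} as functions on the indices 1..n\<close>
definition dominant :: "nat \<Rightarrow> (nat \<Rightarrow> nat) \<Rightarrow> bool" where
  "dominant n lam \<longleftrightarrow> (\<forall>i j. 1 \<le> i \<and> i \<le> j \<and> j \<le> n \<longrightarrow> lam j \<le> lam i)"

definition partlen :: "nat \<Rightarrow> (nat \<Rightarrow> nat) \<Rightarrow> nat" where
  "partlen n mu = card {i\<in>{1..n}. mu i \<noteq> 0}"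

definition varpi :: "nat \<Rightarrow> nat \<Rightarrow> nat" where
  "varpi l i = (if i \<le> l then 1 else 0)"

definition stab :: "nat \<Rightarrow> (nat \<Rightarrow> nat) \<Rightarrow> perm set" where
  "stab n lam = {w \<in> perms n. \<forall>i\<in>{1..n}. lam (w i) = lam i}"

definition Hsub :: "nat \<Rightarrow> (nat \<Rightarrow> nat) \<Rightarrow> 'a::zero hecke set" where
  "Hsub n lam = {h. \<forall>w. w \<notin> stab n lam \<longrightarrow> h w = 0}"

definition onew :: "nat \<Rightarrow> (nat \<Rightarrow> nat) \<Rightarrow> 'a::comm_ring_1 hecke" where
  "onew n lam = (\<Sum>w\<in>stab n lam. Tb w)"

text \<open>columns B(varpi_l): strictly increasing lists of length l in {1..n}\<close>
definition cols :: "nat \<Rightarrow> nat \<Rightarrow> nat list set" where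
  "cols n l = {c. sorted_wrt (<) c \<and> set c \<subseteq> {1..n} \<and> length c = l}"

definition ucol :: "nat \<Rightarrow> nat list \<Rightarrow> perm" where
  "ucol n c = (\<lambda>k. if 1 \<le> k \<and> k \<le> n
       then (c @ sorted_list_of_set ({1..n} - set c)) ! (k - 1) else k)"

definition hcomp :: "nat \<Rightarrow> 'a::comm_ring_1 \<Rightarrow> nat \<Rightarrow> 'a hecke \<Rightarrow> nat list \<Rightarrow> 'a hecke" where
  "hcomp n t l h C = (THE x. \<exists>hF. (\<forall>F\<in>cols n l. hF F \<in> Hsub n (varpi l)) \<and>
       h = (\<Sum>F\<in>cols n l. hmul n t (Tb (ucol n F)) (hF F)) \<and> x = hF C)"

text \<open>Tensors of columns are lists of columns, read left to right (C_r first).\<close>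
fun Psi :: "nat \<Rightarrow> 'a::comm_ring_1 \<Rightarrow> nat list list \<Rightarrow> 'a hecke" where
  "Psi n t [] = onew n (\<lambda>_. 0)"
| "Psi n t [C] = sc (t ^ len n (ucol n C))
      (hmul n t (hinv n t (Tb (inv (ucol n C)))) (onew n (varpi (length C))))"
| "Psi n t (C # S) = sc (t ^ len n (ucol n C))
      (hmul n t (hinv n t (Tb (inv (ucol n C)))) (hcomp n t (length C) (Psi n t S) C))"

definition semistandard :: "nat list list \<Rightarrow> bool" where
  "semistandard cs \<longleftrightarrow> (\<forall>j j' k. j < j' \<and> j' < length cs \<and> k < length (cs ! j')
       \<longrightarrow> k < length (cs ! j) \<and> cs ! j ! k \<le> cs ! j' ! k)"

text \<open>T^0_mu: column j (j = 1..mu_1) is [1..mu'_j]\<close>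
definition T0 :: "nat \<Rightarrow> (nat \<Rightarrow> nat) \<Rightarrow> nat list list" where
  "T0 n mu = map (\<lambda>j. [1..<card {i\<in>{1..n}. j \<le> mu i} + 1]) [1..<mu 1 + 1]"

end

theory Submission
  imports Defs
begin

lemma sum_fun_apply: "(\<Sum>x\<in>A. (f x :: 'b \<Rightarrow> 'c::comm_monoid_add)) y = (\<Sum>x\<in>A. f x y)"
  by (induction A rule: infinite_finite_induct) auto

lemma sc_apply: "sc c h x = c * h x" by (simp add: sc_def)

lemma sc_one[simp]: "sc 1 (h :: 'a::monoid_mult hecke) = h" by (simp add: sc_def)

lemma Tb_apply: "Tb w v = (if v = w then 1 else 0)" by (simp add: Tb_def)

lemma finite_perms[simp]: "finite (perms n)"
  unfolding perms_def using finite_permutations[of "{1..n}"] by simp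

lemma finite_stab[simp]: "finite (stab n lam)"
  by (rule finite_subset[of _ "perms n"]) (auto simp: stab_def)

lemma finite_cols[simp]: "finite (cols n l)"
proof -
  have "cols n l \<subseteq> {xs. set xs \<subseteq> {1..n} \<and> length xs = l}" by (auto simp: cols_def)
  moreover have "finite {xs. set xs \<subseteq> {1..n} \<and> length xs = l}"
    by (rule finite_lists_length_eq) simp
  ultimately show ?thesis by (rule finite_subset)
qed

lemma sum_sc_delta:
  assumes "finite A" "x \<in> A"
  shows "(\<Sum>w\<in>A. sc (Tb x w) (g w)) = (g x :: 'a::comm_ring_1 hecke)"
proof -
  have "(\<Sum>w\<in>A. sc (Tb x w) (g w)) = (\<Sum>w\<in>A. if w = x then g w else 0)"
    by (rule sum.cong) (auto simp: Tb_def sc_def func_zero)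
  also have "\<dots> = g x" using assms by (simp add: sum.delta')
  finally show ?thesis .
qed

lemma gen_mul_lin:
  assumes "finite V"
  shows "gen_mul n t i (\<Sum>v\<in>V. sc (c v) (g v)) = (\<Sum>v\<in>V. sc (c v) (gen_mul n t i (g v)))"
proof (rule ext)
  fix x
  define X where "X w = (if len n w < len n (sref i \<circ> w) then Tb (sref i \<circ> w)
       else sc (t - 1) (Tb w) + sc t (Tb (sref i \<circ> w)))" for w :: perm
  have "gen_mul n t i (\<Sum>v\<in>V. sc (c v) (g v)) x
     = (\<Sum>w\<in>perms n. (\<Sum>v\<in>V. c v * g v w) * X w x)"
    by (simp add: gen_mul_def X_def sum_fun_apply sc_apply)
  also have "\<dots> = (\<Sum>w\<in>perms n. \<Sum>v\<in>V. c v * (g v w * X w x))"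
    by (simp add: sum_distrib_right mult.assoc)
  also have "\<dots> = (\<Sum>v\<in>V. c v * (\<Sum>w\<in>perms n. g v w * X w x))"
    by (subst sum.swap) (simp add: sum_distrib_left)
  also have "\<dots> = (\<Sum>v\<in>V. sc (c v) (gen_mul n t i (g v))) x"
    by (simp add: gen_mul_def X_def sum_fun_apply sc_apply)
  finally show "gen_mul n t i (\<Sum>v\<in>V. sc (c v) (g v)) x = (\<Sum>v\<in>V. sc (c v) (gen_mul n t i (g v))) x" .
qed

lemma foldr_gen_mul_lin:
  assumes "finite V"
  shows "foldr (gen_mul n t) is (\<Sum>v\<in>V. sc (c v) (g v)) = (\<Sum>v\<in>V. sc (c v) (foldr (gen_mul n t) is (g v)))"
  by (induction "is") (simp_all add: gen_mul_lin[OF assms])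

lemma Tw_mul_lin:
  assumes "finite V"
  shows "Tw_mul n t w (\<Sum>v\<in>V. sc (c v) (g v)) = (\<Sum>v\<in>V. sc (c v) (Tw_mul n t w (g v)))"
  unfolding Tw_mul_def by (rule foldr_gen_mul_lin[OF assms])

lemma hmul_Tb:
  assumes "u \<in> perms n"
  shows "hmul n t (Tb u) g = Tw_mul n t u g"
  unfolding hmul_def using sum_sc_delta[OF finite_perms assms, where g="\<lambda>w. Tw_mul n t w g"] by simp

lemma gen_mul_Tb:
  assumes "x \<in> perms n"
  shows "gen_mul n t i (Tb x) = (if len n x < len n (sref i \<circ> x) then Tb (sref i \<circ> x)
       else sc (t - 1) (Tb x) + sc t (Tb (sref i \<circ> x)))"
  unfolding gen_mul_def using sum_sc_delta[OF finite_perms assms, where g="\<lambda>w. if len n w < len n (sref i \<circ> w) then Tb (sref i \<circ> w)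
       else sc (t - 1) (Tb w) + sc t (Tb (sref i \<circ> w))"] by simp

lemma Hsub_expand:
  fixes h :: "'a::comm_ring_1 hecke"
  assumes "h \<in> Hsub n lam"
  shows "h = (\<Sum>v\<in>stab n lam. sc (h v) (Tb v))"
proof (rule ext)
  fix x
  have "(\<Sum>v\<in>stab n lam. sc (h v) (Tb v)) x = (\<Sum>v\<in>stab n lam. if v = x then h v else 0)"
    unfolding sum_fun_apply sc_apply Tb_apply by (rule sum.cong) auto
  also have "\<dots> = h x" using assms by (auto simp: sum.delta' Hsub_def)
  finally show "h x = (\<Sum>v\<in>stab n lam. sc (h v) (Tb v)) x" by simp
qed

lemma onew_apply: "onew n lam x = (if x \<in> stab n lam then 1 else 0)"
  unfolding onew_def by (simp add: sum_fun_apply Tb_apply sum.delta')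

section \<open>Inversions and length\<close>

definition Inv :: "nat \<Rightarrow> perm \<Rightarrow> (nat \<times> nat) set" where
  "Inv n w = {(i, j). 1 \<le> i \<and> i < j \<and> j \<le> n \<and> w j < w i}"

lemma len_Inv: "len n w = card (Inv n w)" by (simp add: len_def Inv_def)

lemma finite_Inv[simp]: "finite (Inv n w)"
  by (rule finite_subset[of _ "{1..n} \<times> {1..n}"]) (auto simp: Inv_def)

lemma perms_in: "w \<in> perms n \<Longrightarrow> (w x \<in> {1..n}) = (x \<in> {1..n})"
proof -
  assume "w \<in> perms n"
  then have "w permutes {1..n}" by (simp add: perms_def)
  then show ?thesis by (rule permutes_in_image)
qed

lemma perms_inI: "w \<in> perms n \<Longrightarrow> x \<in> {1..n} \<Longrightarrow> w x \<in> {1..n}"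
  using perms_in by blast

lemma perms_out: "w \<in> perms n \<Longrightarrow> x \<notin> {1..n} \<Longrightarrow> w x = x"
  by (simp add: perms_def permutes_not_in)

lemma perms_inv1: "w \<in> perms n \<Longrightarrow> inv w (w x) = x"
  by (simp add: perms_def permutes_inverses)

lemma perms_inv2: "w \<in> perms n \<Longrightarrow> w (inv w x) = x"
  by (simp add: perms_def permutes_inverses)

lemma perms_inj: "w \<in> perms n \<Longrightarrow> w x = w y \<longleftrightarrow> x = y"
  by (metis perms_inv1)

lemma perms_inv: "w \<in> perms n \<Longrightarrow> inv w \<in> perms n"
  by (simp add: perms_def permutes_inv)

lemma perms_comp: "u \<in> perms n \<Longrightarrow> v \<in> perms n \<Longrightarrow> u \<circ> v \<in> perms n"
  by (simp add: perms_def permutes_compose)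

lemma perms_id[simp]: "id \<in> perms n"
  by (simp add: perms_def permutes_id)

lemma sref_perms: "1 \<le> i \<Longrightarrow> i < n \<Longrightarrow> sref i \<in> perms n"
  unfolding perms_def sref_def mem_Collect_eq by (rule permutes_swap_id) auto

lemma sref_sref: "sref i \<circ> (sref i \<circ> w) = w"
  by (auto simp: sref_def)

lemma len_subadd:
  assumes u: "u \<in> perms n" and v: "v \<in> perms n"
  shows "len n (u \<circ> v) \<le> len n u + len n v"
proof -
  define g where "g = (\<lambda>(p, q). (min (inv v p) (inv v q), max (inv v p) (inv v q)))"
  have "Inv n (u \<circ> v) \<subseteq> Inv n v \<union> g ` Inv n u"
  proof
    fix x assume x: "x \<in> Inv n (u \<circ> v)"
    then obtain i j where ij: "x = (i, j)" "1 \<le> i" "i < j" "j \<le> n" "u (v j) < u (v i)"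
      by (auto simp: Inv_def)
    show "x \<in> Inv n v \<union> g ` Inv n u"
    proof (cases "v j < v i")
      case True then show ?thesis using ij by (auto simp: Inv_def)
    next
      case False
      then have lt: "v i < v j" using perms_inj[OF v, of i j] ij by auto
      have "v i \<in> {1..n}" "v j \<in> {1..n}" using ij perms_in[OF v] by auto
      then have "(v i, v j) \<in> Inv n u" using lt ij by (auto simp: Inv_def)
      moreover have "g (v i, v j) = (i, j)" using ij by (simp add: g_def perms_inv1[OF v])
      ultimately show ?thesis using ij by force
    qed
  qed
  then have "card (Inv n (u \<circ> v)) \<le> card (Inv n v \<union> g ` Inv n u)"
    by (rule card_mono[rotated]) simp
  also have "\<dots> \<le> card (Inv n v) + card (g ` Inv n u)" by (rule card_Un_le)
  also have "\<dots> \<le> card (Inv n v) + card (Inv n u)" using card_image_le[OF finite_Inv, of g n u] by simp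
  finally show ?thesis by (simp add: len_Inv)
qed

lemma len_sref:
  assumes w: "w \<in> perms n" and i: "1 \<le> i" "i < n"
  shows "len n (sref i \<circ> w) = (if inv w (Suc i) < inv w i then len n w - 1 else Suc (len n w))"
proof -
  define a where "a = inv w i"
  define b where "b = inv w (Suc i)"
  have wa: "\<And>p. w p = i \<longleftrightarrow> p = a" unfolding a_def using w by (metis perms_inv1 perms_inv2)
  have wb: "\<And>p. w p = Suc i \<longleftrightarrow> p = b" unfolding b_def using w by (metis perms_inv1 perms_inv2)
  have ab: "a \<noteq> b" by (metis n_not_Suc_n wa wb)
  have wa': "w a = i" and wb': "w b = Suc i" using wa wb by auto
  then have an: "a \<in> {1..n}" "b \<in> {1..n}" using perms_in[OF w, of a] perms_in[OF w, of b] i by auto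
  define P where "P = (min a b, max a b)"
  have key: "(sref i (w q) < sref i (w p)) = (w q < w p)"
    if "(p, q) \<noteq> P" "p < q" for p q
  proof -
    have "w p \<noteq> w q" using that perms_inj[OF w] by auto
    moreover have "\<not> (w p \<in> {i, Suc i} \<and> w q \<in> {i, Suc i})"
      using that wa wb ab unfolding P_def by (auto simp: min_def max_def)
    ultimately show ?thesis unfolding sref_def transpose_def by auto
  qed
  have eq: "Inv n (sref i \<circ> w) - {P} = Inv n w - {P}"
    using key by (auto simp: Inv_def)
  have PInv: "P \<in> Inv n w \<longleftrightarrow> b < a"
    using an wa' wb' ab by (auto simp: P_def Inv_def min_def max_def)
  have PInv2: "P \<in> Inv n (sref i \<circ> w) \<longleftrightarrow> \<not> b < a"
    using an wa' wb' ab by (auto simp: P_def Inv_def min_def max_def sref_def)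
  show ?thesis
  proof (cases "b < a")
    case True
    then have "Inv n (sref i \<circ> w) = Inv n w - {P}" using eq PInv PInv2 by blast
    then show ?thesis using True PInv by (simp add: len_Inv a_def b_def)
  next
    case False
    then have "Inv n (sref i \<circ> w) = insert P (Inv n w)" using eq PInv PInv2 by blast
    then show ?thesis using False PInv by (simp add: len_Inv a_def b_def)
  qed
qed

lemma descent_exists:
  assumes w: "w \<in> perms n" and pos: "0 < len n w"
  shows "\<exists>i. 1 \<le> i \<and> i < n \<and> inv w (Suc i) < inv w i"
proof (rule ccontr)
  assume no: "\<not> ?thesis"
  have "Inv n w \<noteq> {}" using pos by (auto simp: len_Inv)
  then obtain p q where pq: "1 \<le> p" "p < q" "q \<le> n" "w q < w p" by (auto simp: Inv_def)
  define f where "f = inv w"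
  define a where "a = w q"
  define b where "b = w p"
  have a1: "1 \<le> a" "b \<le> n" "a < b" using perms_in[OF w, of q] perms_in[OF w, of p] pq
    by (auto simp: a_def b_def)
  have mono: "\<forall>d. a + d \<le> b \<longrightarrow> f a \<le> f (a + d)"
  proof
    fix d show "a + d \<le> b \<longrightarrow> f a \<le> f (a + d)"
    proof (induction d)
      case 0 then show ?case by simp
    next
      case (Suc d)
      show ?case
      proof
        assume h: "a + Suc d \<le> b"
        have "\<not> f (Suc (a + d)) < f (a + d)" using no h a1 unfolding f_def by auto
        then show "f a \<le> f (a + Suc d)" using Suc h by auto
      qed
    qed
  qed
  have "f a \<le> f b" using mono[rule_format, of "b - a"] a1 by auto
  moreover have "f a = q" "f b = p" using perms_inv1[OF w] by (auto simp: f_def a_def b_def)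
  ultimately show False using pq by simp
qed

lemma len0_id:
  assumes w: "w \<in> perms n" and l0: "len n w = 0"
  shows "w = id"
proof -
  have "Inv n w = {}" using l0 by (simp add: len_Inv)
  then have incr: "w i < w j" if "1 \<le> i" "i < j" "j \<le> n" for i j
    using that perms_inj[OF w, of i j] by (force simp: Inv_def)
  define xs where "xs = map w [1..<n+1]"
  have s1: "sorted_wrt (<) xs"
  proof (unfold sorted_wrt_iff_nth_less, intro allI impI)
    fix i j assume "i < j" "j < length xs"
    then show "xs ! i < xs ! j" using incr[of "i+1" "j+1"] by (simp add: xs_def del: upt_Suc)
  qed
  have s2: "sorted_wrt (<) [1..<n+1]" by (rule sorted_wrt_upt)
  have wp: "w permutes {1..n}" using w by (simp add: perms_def)
  have "set xs = w ` {1..<n+1}" by (simp only: xs_def set_map set_upt)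
  also have "{1..<n+1} = {1..n}" by auto
  also have "w ` {1..n} = {1..n}" by (rule permutes_image[OF wp])
  finally have A: "set xs = {1..n}" .
  have "set [1..<n+1] = {1..n}" by (simp only: set_upt atLeastLessThanSuc_atLeastAtMost Suc_eq_plus1[symmetric])
  with A have "set [1..<n+1] = set xs" by simp
  then have xs: "[1..<n+1] = xs" using strict_sorted_equal[OF s1 s2] by simp
  show ?thesis
  proof
    fix x show "w x = id x"
    proof (cases "x \<in> {1..n}")
      case True
      then have x1: "x - 1 < n" by auto
      have "xs ! (x - 1) = [1..<n+1] ! (x - 1)" using xs by simp
      also have "[1..<n+1] ! (x - 1) = x" using x1 True by (simp add: nth_upt del: upt_Suc)
      finally have "xs ! (x - 1) = x" .
      moreover have "xs ! (x - 1) = w (1 + (x - 1))" using x1 by (simp add: xs_def nth_upt del: upt_Suc)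
      ultimately show ?thesis using True by simp
    next
      case False then show ?thesis using perms_out[OF w] by simp
    qed
  qed
qed

lemma Tw_mul_Tb_gen:
  "\<forall>w v. w \<in> perms n \<longrightarrow> v \<in> perms n \<longrightarrow> len n w = k \<longrightarrow> len n (w \<circ> v) = len n w + len n v
     \<longrightarrow> foldr (gen_mul n t) (rword n k w) (Tb v) = Tb (w \<circ> v)"
proof (induction k)
  case 0
  show ?case
  proof (intro allI impI)
    fix w v assume "w \<in> perms n" "v \<in> perms n" "len n w = 0"
    then have "w = id" using len0_id by blast
    then show "foldr (gen_mul n t) (rword n 0 w) (Tb v) = Tb (w \<circ> v)" by simp
  qed
next
  case (Suc k)
  show ?case
  proof (intro allI impI)
    fix w v assume w: "w \<in> perms n" and v: "v \<in> perms n" and lw: "len n w = Suc k"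
      and lwv: "len n (w \<circ> v) = len n w + len n v"
    define Q where "Q = (\<lambda>i. 1 \<le> i \<and> i < n \<and> len n (sref i \<circ> w) < len n w)"
    obtain i0 where "1 \<le> i0" "i0 < n" "inv w (Suc i0) < inv w i0"
      using descent_exists[OF w] lw by auto
    then have "Q i0" using len_sref[OF w] lw by (simp add: Q_def)
    define i where "i = (LEAST i. Q i)"
    have Qi: "Q i" unfolding i_def by (rule LeastI) fact
    then have i1: "1 \<le> i" "i < n" by (auto simp: Q_def)
    have lw': "len n (sref i \<circ> w) = k"
      using Qi len_sref[OF w i1] lw by (auto simp: Q_def split: if_splits)
    have w': "sref i \<circ> w \<in> perms n" using perms_comp[OF sref_perms[OF i1] w] .
    have "len n (sref i \<circ> w \<circ> v) \<le> k + len n v" using len_subadd[OF w' v] lw' by simp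
    moreover have "len n (w \<circ> v) \<le> Suc (len n (sref i \<circ> w \<circ> v))"
    proof -
      have "w \<circ> v = sref i \<circ> (sref i \<circ> w \<circ> v)" using sref_sref[of i "w \<circ> v"] by (simp add: o_assoc)
      then show ?thesis using len_sref[OF perms_comp[OF w' v] i1] by (auto split: if_splits)
    qed
    ultimately have lw'v: "len n (sref i \<circ> w \<circ> v) = k + len n v" using lwv lw by simp
    have "len n (sref i \<circ> w \<circ> v) = len n (sref i \<circ> w) + len n v" using lw' lw'v by simp
    note IH = Suc.IH[rule_format, OF w' v lw' this]
    have rw: "rword n (Suc k) w = i # rword n k (sref i \<circ> w)"
      by (simp add: i_def Q_def Let_def)
    have "w \<circ> v = sref i \<circ> (sref i \<circ> w \<circ> v)" using sref_sref[of i "w \<circ> v"] by (simp add: o_assoc)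
    moreover have "len n (sref i \<circ> w \<circ> v) < len n (sref i \<circ> (sref i \<circ> w \<circ> v))"
      using calculation lwv lw lw'v by simp
    ultimately have "gen_mul n t i (Tb (sref i \<circ> w \<circ> v)) = Tb (w \<circ> v)"
      using gen_mul_Tb[OF perms_comp[OF w' v], of t i] by simp
    moreover have "foldr (gen_mul n t) (rword n (Suc k) w) (Tb v) = gen_mul n t i (Tb (sref i \<circ> w \<circ> v))"
      by (simp only: rw foldr.simps comp_apply IH)
    ultimately show "foldr (gen_mul n t) (rword n (Suc k) w) (Tb v) = Tb (w \<circ> v)" by simp
  qed
qed

lemma Tw_mul_Tb:
  assumes "w \<in> perms n" "v \<in> perms n" "len n (w \<circ> v) = len n w + len n v"
  shows "Tw_mul n t w (Tb v) = Tb (w \<circ> v)"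
  using Tw_mul_Tb_gen assms unfolding Tw_mul_def by blast

section \<open>Minimal coset representatives u_E\<close>

definition Lc :: "nat \<Rightarrow> nat list \<Rightarrow> nat list" where
  "Lc n c = c @ sorted_list_of_set ({1..n} - set c)"

lemma cols_D:
  assumes "E \<in> cols n l"
  shows "sorted_wrt (<) E" "set E \<subseteq> {1..n}" "length E = l" "distinct E" "card (set E) = l" "l \<le> n"
proof -
  show s: "sorted_wrt (<) E" "set E \<subseteq> {1..n}" "length E = l" using assms by (auto simp: cols_def)
  then show d: "distinct E" by (simp add: strict_sorted_iff)
  then show c: "card (set E) = l" using s by (simp add: distinct_card)
  have "card (set E) \<le> card {1..n}" using s by (intro card_mono) auto
  then show "l \<le> n" using c by simp
qed

lemma Lc_props:
  assumes "E \<in> cols n l"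
  shows "length (Lc n E) = n" "distinct (Lc n E)" "set (Lc n E) = {1..n}"
proof -
  note D = cols_D[OF assms]
  have "card ({1..n} - set E) = n - l" using D by (simp add: card_Diff_subset)
  then show "length (Lc n E) = n" using D by (simp add: Lc_def)
  show "distinct (Lc n E)" using D by (auto simp: Lc_def)
  show "set (Lc n E) = {1..n}" using D by (auto simp: Lc_def)
qed

lemma ucol_Lc: "1 \<le> k \<Longrightarrow> k \<le> n \<Longrightarrow> ucol n E k = Lc n E ! (k - 1)"
  by (simp add: ucol_def Lc_def)

lemma ucol_out: "\<not> (1 \<le> k \<and> k \<le> n) \<Longrightarrow> ucol n E k = k"
  unfolding ucol_def by auto

lemma ucol_nth1:
  assumes "E \<in> cols n l" "1 \<le> k" "k \<le> l"
  shows "ucol n E k = E ! (k - 1)"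
proof -
  note D = cols_D[OF assms(1)]
  have "ucol n E k = Lc n E ! (k - 1)" using assms D by (simp add: ucol_Lc)
  also have "\<dots> = E ! (k - 1)" unfolding Lc_def using assms D by (simp add: nth_append_left)
  finally show ?thesis .
qed

lemma ucol_nth2:
  assumes "E \<in> cols n l" "l < k" "k \<le> n"
  shows "ucol n E k = sorted_list_of_set ({1..n} - set E) ! (k - 1 - l)"
proof -
  note D = cols_D[OF assms(1)]
  have "ucol n E k = Lc n E ! (k - 1)" using assms D by (simp add: ucol_Lc)
  also have "\<dots> = sorted_list_of_set ({1..n} - set E) ! (k - 1 - l)"
    unfolding Lc_def using assms D by (simp add: nth_append_right)
  finally show ?thesis .
qed

lemma ucol_perms:
  assumes E: "E \<in> cols n l"
  shows "ucol n E \<in> perms n"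
proof -
  note P = Lc_props[OF E]
  have inj: "inj_on (ucol n E) {1..n}"
  proof (rule inj_onI)
    fix x y assume "x \<in> {1..n}" "y \<in> {1..n}" "ucol n E x = ucol n E y"
    then have "Lc n E ! (x - 1) = Lc n E ! (y - 1)" "x - 1 < n" "y - 1 < n" by (auto simp: ucol_Lc)
    then have "x - 1 = y - 1" using P nth_eq_iff_index_eq by metis
    then show "x = y" using \<open>x \<in> {1..n}\<close> \<open>y \<in> {1..n}\<close> by auto
  qed
  have sub: "ucol n E ` {1..n} \<subseteq> {1..n}"
  proof
    fix y assume "y \<in> ucol n E ` {1..n}"
    then obtain x where x: "x \<in> {1..n}" "y = Lc n E ! (x - 1)" by (auto simp: ucol_Lc)
    then have "y \<in> set (Lc n E)" using P by auto
    then show "y \<in> {1..n}" using P by simp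
  qed
  have "ucol n E ` {1..n} = {1..n}" by (rule endo_inj_surj[OF _ sub inj]) simp
  then have "bij_betw (ucol n E) {1..n} {1..n}" using inj by (simp add: bij_betw_def)
  then have "ucol n E permutes {1..n}" by (rule bij_imp_permutes) (simp add: ucol_out)
  then show ?thesis by (simp add: perms_def)
qed

lemma ucol_mono1:
  assumes E: "E \<in> cols n l" and "1 \<le> i" "i < j" "j \<le> l"
  shows "ucol n E i < ucol n E j"
proof -
  note D = cols_D[OF E]
  show ?thesis using assms D sorted_wrt_nth_less[OF D(1), of "i - 1" "j - 1"]
    by (simp add: ucol_nth1)
qed

lemma ucol_mono2:
  assumes E: "E \<in> cols n l" and "l < i" "i < j" "j \<le> n"
  shows "ucol n E i < ucol n E j"
proof -
  note D = cols_D[OF E]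
  have len: "length (sorted_list_of_set ({1..n} - set E)) = n - l" using D by (simp add: card_Diff_subset)
  show ?thesis using assms D len sorted_wrt_nth_less[OF strict_sorted_list_of_set, of "i - 1 - l" "j - 1 - l" "{1..n} - set E"]
    by (simp add: ucol_nth2)
qed

lemma ucol_image:
  assumes E: "E \<in> cols n l"
  shows "ucol n E ` {1..l} = set E"
proof -
  note D = cols_D[OF E]
  show ?thesis
  proof
    show "ucol n E ` {1..l} \<subseteq> set E" using D by (auto simp: ucol_nth1[OF E])
    show "set E \<subseteq> ucol n E ` {1..l}"
    proof
      fix y assume "y \<in> set E"
      then obtain k where k: "k < l" "E ! k = y" using D by (auto simp: in_set_conv_nth)
      then have "ucol n E (k + 1) = y" using ucol_nth1[OF E, of "k+1"] by simp
      then show "y \<in> ucol n E ` {1..l}" using k by force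
    qed
  qed
qed

lemma stab_varpi:
  "v \<in> stab n (varpi l) \<longleftrightarrow> v \<in> perms n \<and> (\<forall>i\<in>{1..n}. (v i \<le> l) = (i \<le> l))"
  by (auto simp: stab_def varpi_def split: if_splits)

lemma len_ucol_comp:
  assumes E: "E \<in> cols n l" and v: "v \<in> stab n (varpi l)"
  shows "len n (ucol n E \<circ> v) = len n (ucol n E) + len n v"
proof -
  define u where "u = ucol n E"
  have u: "u \<in> perms n" using ucol_perms[OF E] by (simp add: u_def)
  have vp: "v \<in> perms n" and vb: "\<And>i. i \<in> {1..n} \<Longrightarrow> (v i \<le> l) = (i \<le> l)"
    using v by (auto simp: stab_varpi)
  have mono: "u p < u q" if "1 \<le> p" "p < q" "q \<le> n" "q \<le> l \<or> l < p" for p q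
    using that ucol_mono1[OF E, of p q] ucol_mono2[OF E, of p q] by (auto simp: u_def)
  have vib: "(inv v p \<le> l) = (p \<le> l)" "inv v p \<in> {1..n}" if "p \<in> {1..n}" for p
  proof -
    have "inv v p \<in> {1..n}" using perms_inI[OF perms_inv[OF vp] that] .
    then show "(inv v p \<le> l) = (p \<le> l)" "inv v p \<in> {1..n}" using vb[of "inv v p"] perms_inv2[OF vp] by auto
  qed
  define g where "g = (\<lambda>(p, q). (inv v p, inv v q))"
  have A: "Inv n v \<subseteq> Inv n (u \<circ> v)"
  proof
    fix x assume "x \<in> Inv n v"
    then obtain i j where ij: "x = (i, j)" "1 \<le> i" "i < j" "j \<le> n" "v j < v i" by (auto simp: Inv_def)
    have "v i \<in> {1..n}" "v j \<in> {1..n}" using ij perms_inI[OF vp] by auto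
    moreover have "v i \<le> l \<longleftrightarrow> v j \<le> l"
      using vb[of i] vb[of j] ij by auto
    ultimately have "u (v j) < u (v i)" using mono[of "v j" "v i"] ij by auto
    then show "x \<in> Inv n (u \<circ> v)" using ij by (auto simp: Inv_def)
  qed
  have cross: "p \<le> l \<and> l < q" if "(p, q) \<in> Inv n u" for p q
  proof -
    have h: "1 \<le> p" "p < q" "q \<le> n" "u q < u p" using that by (auto simp: Inv_def)
    have "\<not> (q \<le> l \<or> l < p)" using mono[OF h(1-3)] h(4) by fastforce
    then show ?thesis by auto
  qed
  have B: "g ` Inv n u \<subseteq> Inv n (u \<circ> v)"
  proof
    fix x assume "x \<in> g ` Inv n u"
    then obtain p q where pq: "(p, q) \<in> Inv n u" "x = (inv v p, inv v q)" by (auto simp: g_def)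
    have pq': "1 \<le> p" "p < q" "q \<le> n" "u q < u p" using pq by (auto simp: Inv_def)
    have c: "p \<le> l" "l < q" using cross[OF pq(1)] by auto
    have "inv v p \<le> l" "l < inv v q" "inv v p \<in> {1..n}" "inv v q \<in> {1..n}"
      using vib[of p] vib[of q] pq' c by auto
    then show "x \<in> Inv n (u \<circ> v)" using pq pq' by (auto simp: Inv_def perms_inv2[OF vp])
  qed
  have C: "Inv n v \<inter> g ` Inv n u = {}"
  proof (rule ccontr)
    assume "Inv n v \<inter> g ` Inv n u \<noteq> {}"
    then obtain p q where pq: "(p, q) \<in> Inv n u" "(inv v p, inv v q) \<in> Inv n v" by (auto simp: g_def)
    have pq': "1 \<le> p" "p < q" "q \<le> n" using pq by (auto simp: Inv_def)
    have c: "p \<le> l" "l < q" using cross[OF pq(1)] by auto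
    have "inv v p \<le> l" "l < inv v q" using vib[of p] vib[of q] pq' c by auto
    moreover have "v (inv v q) < v (inv v p)" using pq(2) by (auto simp: Inv_def)
    ultimately show False using pq' c by (simp add: perms_inv2[OF vp])
  qed
  have D: "inj_on g (Inv n u)"
    by (rule inj_onI) (auto simp: g_def perms_inj[OF perms_inv[OF vp]])
  have "card (Inv n v) + card (Inv n u) = card (Inv n v \<union> g ` Inv n u)"
    using C D by (simp add: card_Un_disjoint card_image)
  also have "\<dots> \<le> card (Inv n (u \<circ> v))" using A B by (intro card_mono) auto
  finally have "len n u + len n v \<le> len n (u \<circ> v)" by (simp add: len_Inv)
  with len_subadd[OF u vp] show ?thesis by (simp add: u_def)
qed

lemma decomp_exists:
  assumes l: "l \<le> n" and w: "w \<in> perms n"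
  shows "\<exists>E\<in>cols n l. \<exists>v\<in>stab n (varpi l). w = ucol n E \<circ> v"
proof -
  define E where "E = sorted_list_of_set (w ` {1..l})"
  have injw: "inj_on w {1..l}" using perms_inj[OF w] by (auto simp: inj_on_def)
  have sub: "w ` {1..l} \<subseteq> {1..n}"
  proof (rule image_subsetI)
    fix x assume "x \<in> {1..l}"
    then have "x \<in> {1..n}" using l by auto
    then show "w x \<in> {1..n}" by (rule perms_inI[OF w])
  qed
  have E: "E \<in> cols n l" using sub injw
    by (auto simp: cols_def E_def card_image)
  define u where "u = ucol n E"
  have u: "u \<in> perms n" using ucol_perms[OF E] by (simp add: u_def)
  have uim: "u ` {1..l} = w ` {1..l}" using ucol_image[OF E] by (simp add: u_def E_def)
  define v where "v = inv u \<circ> w"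
  have vp: "v \<in> perms n" using perms_comp[OF perms_inv[OF u] w] by (simp add: v_def)
  have vb: "(v i \<le> l) = (i \<le> l)" if i: "i \<in> {1..n}" for i
  proof -
    have vi: "v i \<in> {1..n}" using perms_inI[OF vp] i by blast
    have uvi: "u (v i) = w i" by (simp add: v_def perms_inv2[OF u])
    show ?thesis
    proof
      assume "v i \<le> l"
      then have "w i \<in> w ` {1..l}" using vi uim uvi by (metis atLeastAtMost_iff image_eqI)
      then obtain j where "j \<in> {1..l}" "w i = w j" by auto
      then show "i \<le> l" using perms_inj[OF w] by auto
    next
      assume "i \<le> l"
      then have "w i \<in> u ` {1..l}" using uim i by auto
      then obtain j where j: "j \<in> {1..l}" "u j = w i" by auto
      then have "v i = j" using uvi perms_inj[OF u] by metis
      then show "v i \<le> l" using j by simp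
    qed
  qed
  have "v \<in> stab n (varpi l)" using vp vb by (simp add: stab_varpi)
  moreover have "w = u \<circ> v" by (auto simp: v_def perms_inv2[OF u])
  ultimately show ?thesis using E by (auto simp: u_def)
qed

lemma decomp_unique:
  assumes E: "E \<in> cols n l" and E': "E' \<in> cols n l" and v: "v \<in> stab n (varpi l)"
    and v': "v' \<in> stab n (varpi l)" and eq: "ucol n E \<circ> v = ucol n E' \<circ> v'"
  shows "E = E' \<and> v = v'"
proof -
  have vim: "x ` {1..l} = {1..l}" if "x \<in> stab n (varpi l)" for x
  proof -
    have xp: "x \<in> perms n" and xb: "\<And>i. i \<in> {1..n} \<Longrightarrow> (x i \<le> l) = (i \<le> l)"
      using that by (auto simp: stab_varpi)
    have ln: "l \<le> n" using cols_D[OF E] by simp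
    have "x ` {1..l} \<subseteq> {1..l}"
    proof (rule image_subsetI)
      fix i assume i: "i \<in> {1..l}"
      then have "i \<in> {1..n}" using ln by auto
      then show "x i \<in> {1..l}" using xb[of i] perms_inI[OF xp, of i] i by auto
    qed
    moreover have "inj_on x {1..l}" using perms_inj[OF xp] by (auto simp: inj_on_def)
    ultimately show ?thesis by (intro endo_inj_surj) auto
  qed
  have "set E = ucol n E ` {1..l}" using ucol_image[OF E] by simp
  also have "\<dots> = (ucol n E \<circ> v) ` {1..l}" by (metis image_comp vim[OF v])
  also have "\<dots> = (ucol n E' \<circ> v') ` {1..l}" using eq by simp
  also have "\<dots> = ucol n E' ` {1..l}" by (metis image_comp vim[OF v'])
  also have "\<dots> = set E'" using ucol_image[OF E'] by simp
  finally have "E = E'" using strict_sorted_equal cols_D(1)[OF E] cols_D(1)[OF E'] by metis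
  moreover have "v = v'"
  proof
    fix x
    have "ucol n E (v x) = ucol n E (v' x)" using eq \<open>E = E'\<close> by (metis comp_apply)
    then show "v x = v' x" using perms_inj[OF ucol_perms[OF E]] by simp
  qed
  ultimately show ?thesis by simp
qed

section \<open>The decomposition h = sum_E T_{u_E} h_E\<close>

lemma stab_perms: "v \<in> stab n lam \<Longrightarrow> v \<in> perms n" by (simp add: stab_def)

lemma G_expand:
  assumes h: "\<forall>E\<in>cols n l. h E \<in> Hsub n (varpi l)"
  shows "(\<Sum>E\<in>cols n l. hmul n t (Tb (ucol n E)) (h E))
       = (\<Sum>E\<in>cols n l. \<Sum>v\<in>stab n (varpi l). sc (h E v) (Tb (ucol n E \<circ> v)))"
proof (rule sum.cong[OF refl])
  fix E assume E: "E \<in> cols n l"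
  have hm: "hmul n t (Tb (ucol n E)) (h E) = Tw_mul n t (ucol n E) (h E)"
    by (rule hmul_Tb[OF ucol_perms[OF E]])
  have hE: "h E = (\<Sum>v\<in>stab n (varpi l). sc (h E v) (Tb v))"
    using h E by (intro Hsub_expand) auto
  have "Tw_mul n t (ucol n E) (h E) = Tw_mul n t (ucol n E) (\<Sum>v\<in>stab n (varpi l). sc (h E v) (Tb v))"
    by (rule arg_cong[OF hE])
  also have "Tw_mul n t (ucol n E) (\<Sum>v\<in>stab n (varpi l). sc (h E v) (Tb v))
      = (\<Sum>v\<in>stab n (varpi l). sc (h E v) (Tw_mul n t (ucol n E) (Tb v)))"
    by (rule Tw_mul_lin) simp
  also have "\<dots> = (\<Sum>v\<in>stab n (varpi l). sc (h E v) (Tb (ucol n E \<circ> v)))"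
  proof (rule sum.cong[OF refl])
    fix v assume v: "v \<in> stab n (varpi l)"
    show "sc (h E v) (Tw_mul n t (ucol n E) (Tb v)) = sc (h E v) (Tb (ucol n E \<circ> v))"
      by (subst Tw_mul_Tb[OF ucol_perms[OF E] stab_perms[OF v] len_ucol_comp[OF E v]]) (rule refl)
  qed
  finally show "hmul n t (Tb (ucol n E)) (h E) = (\<Sum>v\<in>stab n (varpi l). sc (h E v) (Tb (ucol n E \<circ> v)))"
    using hm by simp
qed

lemma central_at:
  fixes h :: "nat list \<Rightarrow> 'a::comm_ring_1 hecke"
  assumes h: "\<forall>E\<in>cols n l. h E \<in> Hsub n (varpi l)" and C: "C \<in> cols n l"
    and v0: "v0 \<in> stab n (varpi l)"
  shows "(\<Sum>E\<in>cols n l. hmul n t (Tb (ucol n E)) (h E)) (ucol n C \<circ> v0) = h C v0"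
proof -
  have "(\<Sum>E\<in>cols n l. hmul n t (Tb (ucol n E)) (h E)) (ucol n C \<circ> v0)
      = (\<Sum>E\<in>cols n l. \<Sum>v\<in>stab n (varpi l). h E v * Tb (ucol n E \<circ> v) (ucol n C \<circ> v0))"
    by (simp only: G_expand[OF h] sum_fun_apply sc_apply)
  also have "\<dots> = (\<Sum>E\<in>cols n l. if E = C then (\<Sum>v\<in>stab n (varpi l). if v = v0 then h E v else 0) else 0)"
  proof (rule sum.cong[OF refl])
    fix E assume E: "E \<in> cols n l"
    show "(\<Sum>v\<in>stab n (varpi l). h E v * Tb (ucol n E \<circ> v) (ucol n C \<circ> v0))
        = (if E = C then (\<Sum>v\<in>stab n (varpi l). if v = v0 then h E v else 0) else 0)"
    proof (cases "E = C")
      case True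
      have "(\<Sum>v\<in>stab n (varpi l). h E v * Tb (ucol n E \<circ> v) (ucol n C \<circ> v0))
          = (\<Sum>v\<in>stab n (varpi l). if v = v0 then h E v else 0)"
      proof (rule sum.cong[OF refl])
        fix v assume v: "v \<in> stab n (varpi l)"
        have eqv: "(ucol n C \<circ> v0 = ucol n E \<circ> v) = (v = v0)"
          using decomp_unique[OF C E v0 v] True by auto
        show "h E v * Tb (ucol n E \<circ> v) (ucol n C \<circ> v0) = (if v = v0 then h E v else 0)"
          unfolding Tb_apply eqv by simp
      qed
      then show ?thesis using True by simp
    next
      case False
      have "\<And>v. v \<in> stab n (varpi l) \<Longrightarrow> ucol n C \<circ> v0 \<noteq> ucol n E \<circ> v"
        using decomp_unique[OF C E v0] False by blast
      then show ?thesis using False by (auto intro!: sum.neutral simp: Tb_apply)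
    qed
  qed
  also have "\<dots> = h C v0" using C v0 by (simp add: sum.delta')
  finally show ?thesis .
qed

lemma central_out:
  fixes h :: "nat list \<Rightarrow> 'a::comm_ring_1 hecke"
  assumes h: "\<forall>E\<in>cols n l. h E \<in> Hsub n (varpi l)" and w: "w \<notin> perms n"
  shows "(\<Sum>E\<in>cols n l. hmul n t (Tb (ucol n E)) (h E)) w = 0"
proof -
  have "(\<Sum>E\<in>cols n l. hmul n t (Tb (ucol n E)) (h E)) w
      = (\<Sum>E\<in>cols n l. \<Sum>v\<in>stab n (varpi l). h E v * Tb (ucol n E \<circ> v) w)"
    by (simp only: G_expand[OF h] sum_fun_apply sc_apply)
  also have "\<dots> = 0"
  proof (intro sum.neutral ballI)
    fix E v assume E: "E \<in> cols n l" and v: "v \<in> stab n (varpi l)"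
    have "ucol n E \<circ> v \<in> perms n" by (rule perms_comp[OF ucol_perms[OF E] stab_perms[OF v]])
    then have "w \<noteq> ucol n E \<circ> v" using w by auto
    then show "h E v * Tb (ucol n E \<circ> v) w = 0" by (simp add: Tb_apply)
  qed
  finally show ?thesis .
qed

section \<open>Stabilisers and dominant weights\<close>

lemma supp:
  assumes dom: "dominant n mu"
  shows "{i\<in>{1..n}. mu i \<noteq> 0} = {1..partlen n mu}"
proof -
  define S where "S = {i\<in>{1..n}. mu i \<noteq> 0}"
  have down: "j \<in> S" if "i \<in> S" "1 \<le> j" "j \<le> i" for i j
  proof -
    have "mu i \<le> mu j" using dom that by (auto simp: dominant_def S_def)
    then show ?thesis using that by (auto simp: S_def)
  qed
  have fin: "finite S" by (simp add: S_def)
  have "S = {1..card S}"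
  proof (cases "S = {}")
    case True then show ?thesis by simp
  next
    case False
    define m where "m = Max S"
    have mS: "m \<in> S" using False fin by (simp add: m_def)
    have "S = {1..m}"
    proof
      show "S \<subseteq> {1..m}" using fin by (auto simp: m_def S_def)
      show "{1..m} \<subseteq> S" using down mS by auto
    qed
    then show ?thesis by simp
  qed
  then show ?thesis by (simp add: S_def partlen_def)
qed

lemma supp_iff:
  assumes "dominant n mu" "i \<in> {1..n}"
  shows "mu i \<noteq> 0 \<longleftrightarrow> i \<le> partlen n mu"
  using supp[OF assms(1)] assms(2) by (metis (mono_tags, lifting) atLeastAtMost_iff mem_Collect_eq)

lemma partlen_le: "partlen n mu \<le> n"
proof -
  have "partlen n mu \<le> card {1..n}" unfolding partlen_def by (rule card_mono) auto
  then show ?thesis by simp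
qed

lemma stab_cong:
  assumes "\<forall>i\<in>{1..n}. f i = g i"
  shows "stab n f = stab n g"
proof -
  have "w \<in> stab n f \<longleftrightarrow> w \<in> stab n g" for w
  proof -
    have "w \<in> perms n \<Longrightarrow> i \<in> {1..n} \<Longrightarrow> f (w i) = g (w i) \<and> f i = g i" for i
      using assms perms_inI by blast
    then show ?thesis unfolding stab_def by auto
  qed
  then show ?thesis by blast
qed

lemma onew_cong:
  assumes "\<forall>i\<in>{1..n}. f i = g i"
  shows "onew n f = onew n g"
  unfolding onew_def using stab_cong[OF assms] by simp

lemma stab_comp:
  assumes u: "u \<in> stab n mu" and v: "v \<in> perms n"
  shows "u \<circ> v \<in> stab n mu \<longleftrightarrow> v \<in> stab n mu"
proof -
  have up: "u \<in> perms n" using u by (simp add: stab_def)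
  have "mu (u (v i)) = mu (v i)" if "i \<in> {1..n}" for i
    using u perms_inI[OF v that] by (auto simp: stab_def)
  then show ?thesis using perms_comp[OF up v] v by (auto simp: stab_def)
qed

lemma stab_sum:
  assumes dom: "dominant n mu" and pl: "partlen n mu \<le> l"
  shows "stab n (\<lambda>i. varpi l i + mu i) = stab n (varpi l) \<inter> stab n mu"
proof -
  have z: "mu i = 0" if "i \<in> {1..n}" "l < i" for i
    using supp_iff[OF dom that(1)] pl that by auto
  have "w \<in> stab n (\<lambda>i. varpi l i + mu i) \<longleftrightarrow> w \<in> stab n (varpi l) \<and> w \<in> stab n mu" for w
  proof
    assume w: "w \<in> stab n (\<lambda>i. varpi l i + mu i)"
    have wp: "w \<in> perms n" using w by (simp add: stab_def)
    have eq: "varpi l (w i) + mu (w i) = varpi l i + mu i" if "i \<in> {1..n}" for i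
      using w that by (simp add: stab_def)
    have "varpi l (w i) = varpi l i" if i: "i \<in> {1..n}" for i
    proof -
      have wi: "w i \<in> {1..n}" using perms_inI[OF wp i] .
      show ?thesis
      proof (cases "i \<le> l")
        case True
        show ?thesis
        proof (rule ccontr)
          assume "varpi l (w i) \<noteq> varpi l i"
          then have "l < w i" using True by (auto simp: varpi_def split: if_splits)
          then show False using eq[OF i] z[OF wi] True by (simp add: varpi_def)
        qed
      next
        case False
        then show ?thesis using eq[OF i] z[OF i] by (auto simp: varpi_def split: if_splits)
      qed
    qed
    then show "w \<in> stab n (varpi l) \<and> w \<in> stab n mu" using eq wp by (auto simp: stab_def)
  next
    assume "w \<in> stab n (varpi l) \<and> w \<in> stab n mu"
    then show "w \<in> stab n (\<lambda>i. varpi l i + mu i)" by (auto simp: stab_def)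
  qed
  then show ?thesis by blast
qed

lemma core:
  fixes mu :: "nat \<Rightarrow> nat"
  assumes dom: "dominant n mu" and pl: "partlen n mu \<le> l" and C: "C \<in> cols n l"
    and uC: "ucol n C \<in> stab n mu"
  shows "hcomp n t l (onew n mu :: 'a::comm_ring_1 hecke) C = onew n (\<lambda>i. varpi l i + mu i)"
proof -
  have ln: "l \<le> n" using cols_D[OF C] by simp
  have key: "onew n mu (ucol n C \<circ> v) = (onew n (\<lambda>i. varpi l i + mu i) v :: 'a)"
    if v: "v \<in> stab n (varpi l)" for v
    using stab_comp[OF uC stab_perms[OF v]] stab_sum[OF dom pl] v by (simp add: onew_apply)
  have key0: "onew n (\<lambda>i. varpi l i + mu i) v = (0 :: 'a)" if v: "v \<notin> stab n (varpi l)" for v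
    using stab_sum[OF dom pl] v by (simp add: onew_apply)
  define hF :: "nat list \<Rightarrow> 'a hecke" where
    "hF E = (\<lambda>v. if v \<in> stab n (varpi l) then onew n mu (ucol n E \<circ> v) else 0)" for E
  have hF: "\<forall>E\<in>cols n l. hF E \<in> Hsub n (varpi l)" by (simp add: hF_def Hsub_def)
  have dec: "onew n mu = (\<Sum>E\<in>cols n l. hmul n t (Tb (ucol n E)) (hF E))"
  proof
    fix w
    show "onew n mu w = (\<Sum>E\<in>cols n l. hmul n t (Tb (ucol n E)) (hF E)) w"
    proof (cases "w \<in> perms n")
      case True
      then obtain E v where E: "E \<in> cols n l" and v: "v \<in> stab n (varpi l)" and w: "w = ucol n E \<circ> v"
        using decomp_exists[OF ln] by blast
      show ?thesis using central_at[OF hF E v, of t] v by (simp add: w hF_def)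
    next
      case False
      then have "w \<notin> stab n mu" by (auto simp: stab_def)
      then show ?thesis using central_out[OF hF False, of t] by (simp add: onew_apply)
    qed
  qed
  have hFC: "hF C = onew n (\<lambda>i. varpi l i + mu i)"
    using key key0 by (auto simp: hF_def)
  show ?thesis unfolding hcomp_def
  proof (rule the_equality)
    show "\<exists>hF. (\<forall>F\<in>cols n l. hF F \<in> Hsub n (varpi l)) \<and>
      onew n mu = (\<Sum>F\<in>cols n l. hmul n t (Tb (ucol n F)) (hF F)) \<and>
      onew n (\<lambda>i. varpi l i + mu i) = hF C"
      using hF dec hFC by metis
  next
    fix x assume "\<exists>hF. (\<forall>F\<in>cols n l. hF F \<in> Hsub n (varpi l)) \<and>
      onew n mu = (\<Sum>F\<in>cols n l. hmul n t (Tb (ucol n F)) (hF F)) \<and> x = hF C"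
    then obtain h where h: "\<forall>F\<in>cols n l. h F \<in> Hsub n (varpi l)"
      and d: "onew n mu = (\<Sum>F\<in>cols n l. hmul n t (Tb (ucol n F)) (h F))" and x: "x = h C" by blast
    show "x = onew n (\<lambda>i. varpi l i + mu i)"
    proof
      fix v
      show "x v = onew n (\<lambda>i. varpi l i + mu i) v"
      proof (cases "v \<in> stab n (varpi l)")
        case True
        have "h C v = onew n mu (ucol n C \<circ> v)" using central_at[OF h C True, of t] d by simp
        then show ?thesis using key[OF True] x by simp
      next
        case False
        have "h C v = 0" using h C False by (auto simp: Hsub_def)
        then show ?thesis using key0[OF False] x by simp
      qed
    qed
  qed
qed

lemma len_id: "len n id = 0"
proof -
  have "{(i, j). 1 \<le> i \<and> i < j \<and> j \<le> n \<and> j < (i :: nat)} = {}" by auto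
  then show ?thesis unfolding len_def id_apply by (metis card.empty)
qed

lemma hmul_id: "hmul n t (Tb id) g = g"
  by (simp add: hmul_Tb Tw_mul_def len_id)

lemma hinv_id: "hinv n t (Tb id :: 'a::comm_ring_1 hecke) = Tb id"
  unfolding hinv_def
proof (rule the_equality)
  show "Tb id \<in> Hn n \<and> hmul n t (Tb id) (Tb id) = (Tb id :: 'a hecke) \<and> hmul n t (Tb id) (Tb id) = (Tb id :: 'a hecke)"
    by (simp add: hmul_id Hn_def Tb_apply)
next
  fix g :: "'a hecke" assume "g \<in> Hn n \<and> hmul n t (Tb id) g = Tb id \<and> hmul n t g (Tb id) = Tb id"
  then show "g = Tb id" by (simp add: hmul_id)
qed

lemma ucol_id:
  assumes "m \<le> n"
  shows "ucol n [1..<m+1] = id"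
proof
  fix k
  have A: "{1..n} - set [1..<m+1] = {m+1..<n+1}" by auto
  have B: "sorted_list_of_set {m+1..<n+1} = [m+1..<n+1]" by (rule sorted_list_of_set_range)
  have C: "[1..<m+1] @ [m+1..<n+1] = [1..<n+1]"
    using upt_add_eq_append[of 1 "m+1" "n-m"] assms by (simp del: upt_Suc)
  show "ucol n [1..<m+1] k = id k"
  proof (cases "1 \<le> k \<and> k \<le> n")
    case True
    have L: "Lc n [1..<m+1] = [1..<n+1]" unfolding Lc_def A B C by (rule refl)
    have "ucol n [1..<m+1] k = [1..<n+1] ! (k - 1)"
      using True ucol_Lc[of k n "[1..<m+1]"] L by simp
    also have "\<dots> = k" using True by (simp add: nth_upt del: upt_Suc)
    finally show ?thesis by simp
  next
    case False then show ?thesis by (simp add: ucol_out)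
  qed
qed

lemma col_id_cols:
  assumes "m \<le> n"
  shows "[1..<m+1] \<in> cols n m"
  using assms by (auto simp: cols_def simp del: upt_Suc)

lemma Psi_single_id:
  assumes "m \<le> n"
  shows "Psi n t [[1..<m+1]] = (onew n (varpi m) :: 'a::comm_ring_1 hecke)"
proof -
  have u: "ucol n [1..<m+1] = id" by (rule ucol_id[OF assms])
  show ?thesis by (simp only: Psi.simps u inv_id len_id power_0 sc_one hinv_id hmul_id length_upt) simp
qed

lemma Psi_cons_id:
  assumes "m \<le> n" "S \<noteq> []"
  shows "Psi n t ([1..<m+1] # S) = (hcomp n t m (Psi n t S) [1..<m+1] :: 'a::comm_ring_1 hecke)"
proof -
  obtain x xs where S: "S = x # xs" using assms(2) by (cases S) auto
  have u: "ucol n [1..<m+1] = id" by (rule ucol_id[OF assms(1)])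
  show ?thesis unfolding S
    by (simp only: Psi.simps u inv_id len_id power_0 sc_one hinv_id hmul_id length_upt) simp
qed

lemma T0_zero: "lam 1 = 0 \<Longrightarrow> T0 n lam = []"
  by (simp add: T0_def)

lemma T0_suc:
  assumes "lam 1 = Suc k"
  shows "T0 n lam = [1..<partlen n lam + 1] # T0 n (\<lambda>i. lam i - 1)"
proof -
  define f :: "(nat \<Rightarrow> nat) \<Rightarrow> nat \<Rightarrow> nat list" where "f = (\<lambda>lam j. [1..<card {i\<in>{1..n}. j \<le> lam i} + 1])"
  have T: "T0 n lam = map (f lam) [1..<lam 1 + 1]" for lam by (simp add: T0_def f_def)
  have up: "[1..<Suc k + 1] = 1 # map Suc [1..<k+1]"
    by (simp add: upt_conv_Cons map_Suc_upt del: upt_Suc)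
  have "map (f lam \<circ> Suc) [1..<k+1] = map (f (\<lambda>i. lam i - 1)) [1..<k+1]"
  proof (rule map_cong[OF refl])
    fix j' assume "j' \<in> set [1..<k+1]"
    then have j': "1 \<le> j'" by auto
    have "{i\<in>{1..n}. Suc j' \<le> lam i} = {i\<in>{1..n}. j' \<le> lam i - 1}" using j' by auto
    then show "(f lam \<circ> Suc) j' = f (\<lambda>i. lam i - 1) j'" by (simp add: f_def)
  qed
  then have "map (f lam) (map Suc [1..<k+1]) = map (f (\<lambda>i. lam i - 1)) [1..<k+1]"
    by (simp only: map_map)
  have f1: "f lam 1 = [1..<partlen n lam + 1]"
  proof -
    have "{i\<in>{1..n}. 1 \<le> lam i} = {i\<in>{1..n}. lam i \<noteq> 0}" by auto
    then show ?thesis by (simp add: f_def partlen_def)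
  qed
  show ?thesis
    using T[of lam] T[of "\<lambda>i. lam i - 1"] up assms f1 \<open>map (f lam) (map Suc [1..<k+1]) = _\<close>
    by (simp del: upt_Suc)
qed

lemma Psi_T0_gen:
  assumes n1: "1 \<le> n"
  shows "\<forall>lam. dominant n lam \<longrightarrow> lam 1 = k \<longrightarrow> Psi n t (T0 n lam) = (onew n lam :: 'a::comm_ring_1 hecke)"
proof (induction k)
  case 0
  show ?case
  proof (intro allI impI)
    fix lam assume dom: "dominant n lam" and l0: "lam 1 = 0"
    have "\<forall>i\<in>{1..n}. (\<lambda>_. 0) i = lam i"
    proof
      fix i assume "i \<in> {1..n}"
      then have "lam i \<le> lam 1" using dom unfolding dominant_def by auto
      then show "(\<lambda>_. 0) i = lam i" using l0 by simp
    qed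
    then have e: "onew n (\<lambda>_. 0) = onew n lam" by (rule onew_cong)
    show "Psi n t (T0 n lam) = onew n lam"
      unfolding T0_zero[of lam n, OF l0] Psi.simps(1) e by (rule refl)
  qed
next
  case (Suc k)
  show ?case
  proof (intro allI impI)
    fix lam assume dom: "dominant n lam" and lk: "lam 1 = Suc k"
    define m where "m = partlen n lam"
    define lam' where "lam' = (\<lambda>i. lam i - 1)"
    have mn: "m \<le> n" by (simp add: m_def partlen_le)
    have sup: "\<And>i. i \<in> {1..n} \<Longrightarrow> lam i \<noteq> 0 \<longleftrightarrow> i \<le> m"
      using supp_iff[OF dom] by (simp add: m_def)
    have dom': "dominant n lam'" using dom by (auto simp: dominant_def lam'_def intro: diff_le_mono)
    have lk': "lam' 1 = k" using lk by (simp add: lam'_def)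
    have T: "T0 n lam = [1..<m+1] # T0 n lam'" using T0_suc[of lam k n, OF lk] by (simp add: m_def lam'_def)
    show "Psi n t (T0 n lam) = onew n lam"
    proof (cases k)
      case 0
      have "T0 n lam' = []" using T0_zero lk' 0 by simp
      then have "Psi n t (T0 n lam) = onew n (varpi m)" unfolding T by (simp only: Psi_single_id[OF mn])
      also have "onew n (varpi m) = onew n lam"
      proof (rule onew_cong, intro ballI)
        fix i assume i: "i \<in> {1..n}"
        have "lam i \<le> lam 1" using dom i by (auto simp: dominant_def)
        then show "varpi m i = lam i" using sup[OF i] lk 0 by (auto simp: varpi_def)
      qed
      finally show ?thesis .
    next
      case (Suc k'')
      have ne: "T0 n lam' \<noteq> []" using lk' Suc by (simp add: T0_def)
      have IH: "Psi n t (T0 n lam') = onew n lam'" using Suc.IH dom' lk' by blast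
      have "Psi n t (T0 n lam) = hcomp n t m (onew n lam') [1..<m+1]"
        unfolding T Psi_cons_id[OF mn ne] IH by (rule refl)
      also have "\<dots> = onew n (\<lambda>i. varpi m i + lam' i)"
      proof (rule core[OF dom' _ col_id_cols[OF mn]])
        have "{i\<in>{1..n}. lam' i \<noteq> 0} \<subseteq> {i\<in>{1..n}. lam i \<noteq> 0}" by (auto simp: lam'_def)
        then show "partlen n lam' \<le> m" unfolding m_def partlen_def by (intro card_mono) auto
        show "ucol n [1..<m+1] \<in> stab n lam'" using ucol_id[OF mn] by (simp add: stab_def)
      qed
      also have "\<dots> = onew n lam"
      proof (rule onew_cong, intro ballI)
        fix i assume i: "i \<in> {1..n}"
        show "varpi m i + lam' i = lam i" using sup[OF i] by (auto simp: varpi_def lam'_def)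
      qed
      finally show ?thesis .
    qed
  qed
qed

lemma Psi_T0:
  assumes "1 \<le> n" "dominant n lam"
  shows "Psi n t (T0 n lam) = (onew n lam :: 'a::comm_ring_1 hecke)"
  using Psi_T0_gen[OF assms(1)] assms(2) by blast

lemma sorted_lower:
  assumes "sorted_wrt (<) F" "set F \<subseteq> {1..n}" "k < length F"
  shows "k + 1 \<le> F ! k"
  using assms(3)
proof (induction k)
  case 0
  then have "F ! 0 \<in> set F" by simp
  then show ?case using assms(2) by auto
next
  case (Suc k)
  have "F ! k < F ! Suc k" using sorted_wrt_nth_less[OF assms(1), of k "Suc k"] Suc.prems by simp
  then show ?case using Suc by simp
qed

theorem proposition6p1:
  fixes n l :: nat and t :: "'a::comm_ring_1" and mu :: "nat \<Rightarrow> nat" and F :: "nat list"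
  assumes "1 \<le> n" and "t dvd 1"
    and "dominant n mu"
    and "l \<in> {1..n}" and "partlen n mu \<le> l"
    and "F \<in> cols n l"
    and "semistandard (F # T0 n mu)"
  shows "Psi n t (F # T0 n mu) =
           sc (t ^ len n (ucol n F))
             (hmul n t (hinv n t (Tb (inv (ucol n F)))) (onew n (\<lambda>i. varpi l i + mu i)))
       \<and> (\<forall>lam. dominant n lam \<longrightarrow> Psi n t (T0 n lam) = onew n lam)"
proof
  show "\<forall>lam. dominant n lam \<longrightarrow> Psi n t (T0 n lam) = onew n lam"
    using Psi_T0[OF assms(1)] by blast
next
  note dom = assms(3) and F = assms(6) and ss = assms(7) and pl = assms(5)
  note D = cols_D[OF F]
  show "Psi n t (F # T0 n mu) =
           sc (t ^ len n (ucol n F))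
             (hmul n t (hinv n t (Tb (inv (ucol n F)))) (onew n (\<lambda>i. varpi l i + mu i)))"
  proof (cases "mu 1")
    case 0
    have "\<forall>i\<in>{1..n}. varpi l i = varpi l i + mu i"
    proof
      fix i assume "i \<in> {1..n}"
      then have "mu i \<le> mu 1" using dom unfolding dominant_def by auto
      then show "varpi l i = varpi l i + mu i" using 0 by simp
    qed
    then have e: "onew n (varpi l) = onew n (\<lambda>i. varpi l i + mu i)" by (rule onew_cong)
    show ?thesis unfolding T0_zero[of mu n, OF 0] Psi.simps(2) D(3) e by (rule refl)
  next
    case (Suc k)
    define m where "m = partlen n mu"
    have T: "T0 n mu = [1..<m+1] # T0 n (\<lambda>i. mu i - 1)" using T0_suc[of mu k n, OF Suc] by (simp add: m_def)
    have ml: "m \<le> l" using pl by (simp add: m_def)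
    have sup: "\<And>i. i \<in> {1..n} \<Longrightarrow> mu i \<noteq> 0 \<longleftrightarrow> i \<le> m"
      using supp_iff[OF dom] by (simp add: m_def)
    have Fk: "F ! k = k + 1" if k: "k < m" for k
    proof -
      have c: "0 < (1::nat) \<and> 1 < length (F # T0 n mu) \<and> k < length ((F # T0 n mu) ! 1)"
        using T k by (simp del: upt_Suc)
      have "(F # T0 n mu) ! 0 ! k \<le> (F # T0 n mu) ! 1 ! k"
        using ss c unfolding semistandard_def by blast
      then have "F ! k \<le> [1..<m+1] ! k" using T by (simp del: upt_Suc)
      then have "F ! k \<le> k + 1" using k by (simp del: upt_Suc add: nth_upt)
      moreover have "k + 1 \<le> F ! k" using sorted_lower[OF D(1) D(2)] k ml D(3) by simp
      ultimately show ?thesis by simp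
    qed
    define u where "u = ucol n F"
    have up: "u \<in> perms n" using ucol_perms[OF F] by (simp add: u_def)
    have ufix: "u i = i" if "1 \<le> i" "i \<le> m" for i
      using ucol_nth1[OF F, of i] that ml Fk[of "i - 1"] by (simp add: u_def)
    have uS: "u \<in> stab n mu"
    proof -
      have "mu (u i) = mu i" if i: "i \<in> {1..n}" for i
      proof (cases "i \<le> m")
        case True then show ?thesis using ufix i by simp
      next
        case False
        have ui: "u i \<in> {1..n}" using perms_inI[OF up i] .
        have "\<not> u i \<le> m"
        proof
          assume "u i \<le> m"
          then have "u (u i) = u i" using ufix ui by simp
          then have "u i = i" using perms_inj[OF up] by simp
          then show False using False \<open>u i \<le> m\<close> by simp
        qed
        then show ?thesis using sup[OF i] sup[OF ui] False by auto
      qed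
      then show ?thesis using up by (simp add: stab_def)
    qed
    have ne: "T0 n mu \<noteq> []" using T by simp
    obtain x xs where xs: "T0 n mu = x # xs" using ne by (cases "T0 n mu") auto
    have "Psi n t (F # T0 n mu) = sc (t ^ len n (ucol n F))
        (hmul n t (hinv n t (Tb (inv (ucol n F)))) (hcomp n t l (Psi n t (T0 n mu)) F))"
      unfolding xs using D by simp
    also have "Psi n t (T0 n mu) = onew n mu" by (rule Psi_T0[OF assms(1) dom])
    also have "hcomp n t l (onew n mu) F = onew n (\<lambda>i. varpi l i + mu i)"
      by (rule core[OF dom pl F]) (simp add: uS[unfolded u_def])
    finally show ?thesis .
  qed
qed

end
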